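(* Let $T$ be a tree with $|V(T)|$ even, and suppose the $3$-coloring game is being played on $T$ (starting from the uncolored tree, Alice moving first). If at some point of the game the current partial coloring contains an uncolored path $P_4$ that is surrounded by a color $\alpha$, i.e. each vertex of the $P_4$ has a neighbor colored $\alpha$ and no neighbor colored with a color other than $\alpha$, then Bob can win the $3$-coloring game on $T$.
   Context: The $3$-coloring game on a graph: Alice and Bob alternate turns, Alice first, each coloring an uncolored vertex with one of $3$ colors not used on any of its neighbors; Bob wins if at some point an uncolored vertex has no such color available; Alice wins if all vertices become colored. *)

theory Defs
  imports Main
begin

definition simple_graph :: "'a set \<Rightarrow> 'a set set \<Rightarrow> bool" where
  "simple_graph V E \<longleftrightarrow> finite V \<and> (\<forall>e\<in>E. \<exists>u v. e = {u, v} \<and> u \<noteq> v \<and> u \<in> V \<and> v \<in> V)"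

definition adj :: "'a set set \<Rightarrow> 'a \<Rightarrow> 'a \<Rightarrow> bool" where
  "adj E u v \<longleftrightarrow> {u, v} \<in> E \<and> u \<noteq> v"

definition is_walk :: "'a set set \<Rightarrow> 'a list \<Rightarrow> bool" where
  "is_walk E xs \<longleftrightarrow> xs \<noteq> [] \<and> (\<forall>i. Suc i < length xs \<longrightarrow> adj E (xs ! i) (xs ! Suc i))"

definition connected_graph :: "'a set \<Rightarrow> 'a set set \<Rightarrow> bool" where
  "connected_graph V E \<longleftrightarrow> V \<noteq> {} \<and>
     (\<forall>u\<in>V. \<forall>v\<in>V. \<exists>xs. is_walk E xs \<and> hd xs = u \<and> last xs = v)"

definition is_cycle :: "'a set set \<Rightarrow> 'a list \<Rightarrow> bool" where
  "is_cycle E xs \<longleftrightarrow> length xs \<ge> 3 \<and> distinct xs \<and> is_walk E xs \<and> adj E (last xs) (hd xs)"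

definition is_tree :: "'a set \<Rightarrow> 'a set set \<Rightarrow> bool" where
  "is_tree V E \<longleftrightarrow> simple_graph V E \<and> connected_graph V E \<and> (\<nexists>xs. is_cycle E xs)"

(* Partial colorings: c v = Some j means v has color j (colors are 0..<k), None = uncolored. *)
definition available :: "nat \<Rightarrow> 'a set set \<Rightarrow> ('a \<Rightarrow> nat option) \<Rightarrow> 'a \<Rightarrow> nat set" where
  "available k E c v = {j. j < k \<and> \<not> (\<exists>u. adj E u v \<and> c u = Some j)}"

(* Bob has won: some uncolored vertex has no available color *)
definition blocked :: "nat \<Rightarrow> 'a set \<Rightarrow> 'a set set \<Rightarrow> ('a \<Rightarrow> nat option) \<Rightarrow> bool" where
  "blocked k V E c \<longleftrightarrow> (\<exists>v\<in>V. c v = None \<and> available k E c v = {})"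

definition legal_move :: "nat \<Rightarrow> 'a set \<Rightarrow> 'a set set \<Rightarrow> ('a \<Rightarrow> nat option) \<Rightarrow> 'a \<Rightarrow> nat \<Rightarrow> bool" where
  "legal_move k V E c v j \<longleftrightarrow> v \<in> V \<and> c v = None \<and> j \<in> available k E c v"

(* Alice moves first, so it is Alice's turn iff an even number of vertices is colored *)
definition alice_turn :: "'a set \<Rightarrow> ('a \<Rightarrow> nat option) \<Rightarrow> bool" where
  "alice_turn V c \<longleftrightarrow> even (card {v\<in>V. c v \<noteq> None})"

(* Positions arising in an actual play of the game from the uncolored graph
   (the game stops as soon as Bob has won). *)
inductive reachable :: "nat \<Rightarrow> 'a set \<Rightarrow> 'a set set \<Rightarrow> ('a \<Rightarrow> nat option) \<Rightarrow> bool"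
  for k V E where
  start: "reachable k V E (\<lambda>_. None)"
| step: "reachable k V E c \<Longrightarrow> \<not> blocked k V E c \<Longrightarrow> legal_move k V E c v j
          \<Longrightarrow> reachable k V E (c(v := Some j))"

inductive bob_wins :: "nat \<Rightarrow> 'a set \<Rightarrow> 'a set set \<Rightarrow> ('a \<Rightarrow> nat option) \<Rightarrow> bool"
  for k V E where
  won: "blocked k V E c \<Longrightarrow> bob_wins k V E c"
| bob_move: "\<not> alice_turn V c \<Longrightarrow> legal_move k V E c v j \<Longrightarrow> bob_wins k V E (c(v := Some j))
          \<Longrightarrow> bob_wins k V E c"
| alice_move: "alice_turn V c \<Longrightarrow> (\<exists>v\<in>V. c v = None) \<Longrightarrow>
          (\<forall>v j. legal_move k V E c v j \<longrightarrow> bob_wins k V E (c(v := Some j)))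
          \<Longrightarrow> bob_wins k V E c"

definition surrounded_P4 :: "'a set \<Rightarrow> 'a set set \<Rightarrow> ('a \<Rightarrow> nat option) \<Rightarrow> nat \<Rightarrow> 'a list \<Rightarrow> bool" where
  "surrounded_P4 V E c al P \<longleftrightarrow> length P = 4 \<and> distinct P \<and> set P \<subseteq> V \<and> is_walk E P \<and>
     (\<forall>x\<in>set P. c x = None \<and> (\<exists>y. adj E x y \<and> c y = Some al) \<and>
        (\<forall>y. adj E x y \<and> c y \<noteq> None \<longrightarrow> c y = Some al))"

end

theory Submission
  imports Defs
begin


lemma adj_sym: "adj E u v = adj E v u" unfolding adj_def by (auto simp: insert_commute)
lemma adj_neq: "adj E u v \<Longrightarrow> u \<noteq> v" unfolding adj_def by auto

lemma walk1[simp]: "is_walk E [x]" by (simp add: is_walk_def)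

lemma walk_Cons2[simp]: "is_walk E (x#y#xs) = (adj E x y \<and> is_walk E (y#xs))"
proof
  assume H: "is_walk E (x#y#xs)"
  then have A: "\<forall>i. Suc i < length (x#y#xs) \<longrightarrow> adj E ((x#y#xs)!i) ((x#y#xs)!Suc i)"
    by (simp add: is_walk_def)
  have "adj E x y" using A[rule_format, of 0] by simp
  moreover have "is_walk E (y#xs)" unfolding is_walk_def
  proof (intro conjI allI impI)
    fix i assume "Suc i < length (y#xs)"
    then show "adj E ((y#xs)!i) ((y#xs)!Suc i)" using A[rule_format, of "Suc i"] by simp
  qed simp
  ultimately show "adj E x y \<and> is_walk E (y#xs)" ..
next
  assume H: "adj E x y \<and> is_walk E (y#xs)"
  show "is_walk E (x#y#xs)" unfolding is_walk_def
  proof (intro conjI allI impI)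
    fix i assume i: "Suc i < length (x#y#xs)"
    show "adj E ((x#y#xs)!i) ((x#y#xs)!Suc i)"
    proof (cases i)
      case 0 then show ?thesis using H by simp
    next
      case (Suc k) then show ?thesis using H i by (simp add: is_walk_def)
    qed
  qed simp
qed

lemma cyc3: "is_cycle E [a,b,c] = (distinct [a,b,c] \<and> adj E a b \<and> adj E b c \<and> adj E c a)"
  by (simp add: is_cycle_def)



definition oth :: "nat \<Rightarrow> nat \<Rightarrow> nat" where "oth a j = 3 - a - j"

lemma oth_props:
  assumes "a < 3" "j < 3" "j \<noteq> a"
  shows "oth a j < 3" "oth a j \<noteq> a" "oth a j \<noteq> j" "oth a (oth a j) = j"
    "\<And>i. i < 3 \<Longrightarrow> i = a \<or> i = j \<or> i = oth a j"
proof -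
  show "oth a j < 3" using assms unfolding oth_def by arith
  show "oth a j \<noteq> a" using assms unfolding oth_def by arith
  show "oth a j \<noteq> j" using assms unfolding oth_def by arith
  show "oth a (oth a j) = j" using assms unfolding oth_def by arith
  show "\<And>i. i < 3 \<Longrightarrow> i = a \<or> i = j \<or> i = oth a j" using assms unfolding oth_def by arith
qed

lemma blocked3:
  assumes "v \<in> V" "f v = None" "adj E ua v" "f ua = Some ia" "adj E ub v" "f ub = Some ib"
    "adj E uc v" "f uc = Some ic" "ia \<noteq> ib" "ia \<noteq> ic" "ib \<noteq> ic" "ia < 3" "ib < 3" "ic < 3"
  shows "blocked 3 V E f"
proof -
  have "available 3 E f v = {}"
  proof (rule ccontr)
    assume "available 3 E f v \<noteq> {}"
    then obtain i where i: "i < 3" "\<not> (\<exists>u. adj E u v \<and> f u = Some i)"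
      unfolding available_def by auto
    have "i = ia \<or> i = ib \<or> i = ic" using i(1) assms(9-14) by linarith
    then show False using i(2) assms(3-8) by auto
  qed
  then show ?thesis using assms(1,2) unfolding blocked_def by auto
qed

lemma avail_iff: "i \<in> available 3 E f v \<longleftrightarrow> i < 3 \<and> (\<forall>u. adj E u v \<longrightarrow> f u \<noteq> Some i)"
  unfolding available_def by auto

lemma win1:
  assumes "\<not> alice_turn V f" "legal_move 3 V E f w k" "blocked 3 V E (f(w := Some k))"
  shows "bob_wins 3 V E f"
  using assms by (meson bob_wins.bob_move bob_wins.won)

lemma turn_flip:
  assumes "finite V" "v \<in> V" "f v = None"
  shows "alice_turn V (f(v := Some j)) = (\<not> alice_turn V f)"
proof -
  have "{w\<in>V. (f(v := Some j)) w \<noteq> None} = insert v {w\<in>V. f w \<noteq> None}" using assms by auto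
  moreover have "v \<notin> {w\<in>V. f w \<noteq> None}" using assms by auto
  ultimately have "card {w\<in>V. (f(v := Some j)) w \<noteq> None} = Suc (card {w\<in>V. f w \<noteq> None})"
    using assms(1) by simp
  then show ?thesis unfolding alice_turn_def by simp
qed

lemma measure_dec:
  assumes "finite V" "v \<in> V" "f v = None"
  shows "card {w\<in>V. (f(v := Some j)) w = None} < card {w\<in>V. f w = None}"
proof -
  have "{w\<in>V. (f(v := Some j)) w = None} \<subset> {w\<in>V. f w = None}" using assms by auto
  then show ?thesis using assms(1) by (simp add: psubset_card_mono)
qed

locale tg =
  fixes V :: "'a set" and E :: "'a set set" and al :: nat
  assumes tree: "is_tree V E" and evV: "even (card V)" and al3: "al < 3"
begin

lemma finV: "finite V" using tree unfolding is_tree_def simple_graph_def by auto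

lemma nocyc: "is_cycle E xs \<Longrightarrow> False" using tree unfolding is_tree_def by auto

definition P4 where "P4 x1 x2 x3 x4 \<longleftrightarrow> distinct [x1,x2,x3,x4] \<and> {x1,x2,x3,x4} \<subseteq> V \<and>
   adj E x1 x2 \<and> adj E x2 x3 \<and> adj E x3 x4"

definition Inv where "Inv S f \<longleftrightarrow> (\<forall>p\<in>S. f p = None \<and> (\<exists>y. adj E p y \<and> f y = Some al) \<and>
   (\<forall>y. adj E p y \<and> f y \<noteq> None \<longrightarrow> f y = Some al))"

lemma P4_rev: "P4 x1 x2 x3 x4 \<Longrightarrow> P4 x4 x3 x2 x1"
  unfolding P4_def by (auto simp: adj_sym)

lemma set_rev: "{x4,x3,x2,x1} = {x1,x2,x3,x4}" by auto

lemma P4_nonadj: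
  assumes "P4 x1 x2 x3 x4"
  shows "\<not> adj E x1 x3" "\<not> adj E x2 x4" "\<not> adj E x1 x4"
proof -
  show "\<not> adj E x1 x3"
    using nocyc[of "[x1,x2,x3]"] assms unfolding P4_def by (auto simp: is_cycle_def adj_sym)
  show "\<not> adj E x2 x4"
    using nocyc[of "[x2,x3,x4]"] assms unfolding P4_def by (auto simp: is_cycle_def adj_sym)
  show "\<not> adj E x1 x4"
    using nocyc[of "[x1,x2,x3,x4]"] assms unfolding P4_def by (auto simp: is_cycle_def adj_sym)
qed

lemma one_nbr:
  assumes "P4 x1 x2 x3 x4" "v \<notin> {x1,x2,x3,x4}" "p \<in> {x1,x2,x3,x4}" "q \<in> {x1,x2,x3,x4}"
    "adj E v p" "adj E v q"
  shows "p = q"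
proof -
  have d: "distinct [x1,x2,x3,x4]" and e: "adj E x1 x2" "adj E x2 x3" "adj E x3 x4"
    using assms(1) unfolding P4_def by auto
  have c12: "\<not> (adj E v x1 \<and> adj E v x2)"
    using nocyc[of "[v,x1,x2]"] d e assms(2) by (auto simp: is_cycle_def adj_sym)
  have c23: "\<not> (adj E v x2 \<and> adj E v x3)"
    using nocyc[of "[v,x2,x3]"] d e assms(2) by (auto simp: is_cycle_def adj_sym)
  have c34: "\<not> (adj E v x3 \<and> adj E v x4)"
    using nocyc[of "[v,x3,x4]"] d e assms(2) by (auto simp: is_cycle_def adj_sym)
  have c13: "\<not> (adj E v x1 \<and> adj E v x3)"
    using nocyc[of "[v,x1,x2,x3]"] d e assms(2) by (auto simp: is_cycle_def adj_sym)
  have c24: "\<not> (adj E v x2 \<and> adj E v x4)"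
    using nocyc[of "[v,x2,x3,x4]"] d e assms(2) by (auto simp: is_cycle_def adj_sym)
  have c14: "\<not> (adj E v x1 \<and> adj E v x4)"
    using nocyc[of "[v,x1,x2,x3,x4]"] d e assms(2) by (auto simp: is_cycle_def adj_sym)
  show ?thesis using assms(3-6) c12 c23 c34 c13 c24 c14 by auto
qed

end


context tg begin

lemma Inv_none: "Inv S f \<Longrightarrow> p \<in> S \<Longrightarrow> f p = None" unfolding Inv_def by auto
lemma Inv_al: "Inv S f \<Longrightarrow> p \<in> S \<Longrightarrow> \<exists>y. adj E y p \<and> f y = Some al"
  unfolding Inv_def by (metis adj_sym)
lemma Inv_nb: "Inv S f \<Longrightarrow> p \<in> S \<Longrightarrow> adj E u p \<Longrightarrow> f u = Some k \<Longrightarrow> k = al"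
  unfolding Inv_def by (metis adj_sym option.distinct(1) option.inject)

lemma P4_facts:
  assumes "P4 x1 x2 x3 x4"
  shows "x1 \<in> V" "x2 \<in> V" "x3 \<in> V" "x4 \<in> V" "distinct [x1,x2,x3,x4]"
    "adj E x1 x2" "adj E x2 x3" "adj E x3 x4" "adj E x2 x1" "adj E x3 x2" "adj E x4 x3"
  using assms unfolding P4_def by (auto simp: adj_sym)

lemma flip: "v \<in> V \<Longrightarrow> f v = None \<Longrightarrow> alice_turn V (f(v := Some j)) = (\<not> alice_turn V f)"
  using turn_flip[of V v f j] finV by blast

lemma dec: "v \<in> V \<Longrightarrow> f v = None \<Longrightarrow> card {w\<in>V. (f(v := Some j)) w = None} < card {w\<in>V. f w = None}"
  using measure_dec[of V v f j] finV by blast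

lemma legal_not_al:
  assumes "Inv S f" "p \<in> S" "legal_move 3 V E f p j"
  shows "j \<noteq> al" "j < 3"
proof -
  obtain y where "adj E y p" "f y = Some al" using Inv_al[OF assms(1,2)] by auto
  then show "j \<noteq> al" "j < 3" using assms(3) unfolding legal_move_def avail_iff by auto
qed

lemma alice_end:
  assumes P: "P4 x1 x2 x3 x4" and I: "Inv {x1,x2,x3,x4} f" and T: "alice_turn V f"
    and L: "legal_move 3 V E f x1 j"
  shows "bob_wins 3 V E (f(x1 := Some j))"
proof -
  note F = P4_facts[OF P]
  note N = P4_nonadj[OF P]
  have j: "j \<noteq> al" "j < 3" using legal_not_al[OF I _ L] by auto
  note O = oth_props[OF al3 j(2) j(1)]
  obtain y2 where y2: "adj E y2 x2" "f y2 = Some al" using Inv_al[OF I] by auto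
  have n: "f x1 = None" "f x2 = None" "f x3 = None" using Inv_none[OF I] by auto
  let ?f1 = "f(x1 := Some j)"
  let ?k = "oth al j"
  show ?thesis
  proof (rule win1[where w=x3 and k="?k"])
    show "\<not> alice_turn V ?f1" using flip[of x1 f j] F(1) n(1) T by simp
    show "legal_move 3 V E ?f1 x3 ?k" unfolding legal_move_def avail_iff
    proof (intro conjI allI impI)
      fix u assume u: "adj E u x3"
      show "?f1 u \<noteq> Some ?k"
      proof (cases "u = x1")
        case True then show ?thesis using u N(1) by simp
      next
        case False then show ?thesis using Inv_nb[OF I _ u] O(2) by auto
      qed
    qed (use F n O in auto)
    show "blocked 3 V E (?f1(x3 := Some ?k))"
      apply (rule blocked3[where v=x2 and ua=y2 and ia=al and ub=x1 and ib=j and uc=x3 and ic="?k"])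
      using F n y2 O j al3 by (auto simp: adj_sym)
  qed
qed

lemma alice_inner:
  assumes P: "P4 x1 x2 x3 x4" and I: "Inv {x1,x2,x3,x4} f" and T: "alice_turn V f"
    and L: "legal_move 3 V E f x2 j"
  shows "bob_wins 3 V E (f(x2 := Some j))"
proof -
  note F = P4_facts[OF P]
  note N = P4_nonadj[OF P]
  have j: "j \<noteq> al" "j < 3" using legal_not_al[OF I _ L] by auto
  note O = oth_props[OF al3 j(2) j(1)]
  obtain y3 where y3: "adj E y3 x3" "f y3 = Some al" using Inv_al[OF I] by auto
  have n: "f x2 = None" "f x3 = None" "f x4 = None" using Inv_none[OF I] by auto
  let ?f1 = "f(x2 := Some j)"
  let ?k = "oth al j"
  show ?thesis
  proof (rule win1[where w=x4 and k="?k"])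
    show "\<not> alice_turn V ?f1" using flip[of x2 f j] F(2) n(1) T by simp
    show "legal_move 3 V E ?f1 x4 ?k" unfolding legal_move_def avail_iff
    proof (intro conjI allI impI)
      fix u assume u: "adj E u x4"
      show "?f1 u \<noteq> Some ?k"
      proof (cases "u = x2")
        case True then show ?thesis using u N(2) by simp
      next
        case False then show ?thesis using Inv_nb[OF I _ u] O(2) by auto
      qed
    qed (use F n O in auto)
    show "blocked 3 V E (?f1(x4 := Some ?k))"
      apply (rule blocked3[where v=x3 and ua=y3 and ia=al and ub=x2 and ib=j and uc=x4 and ic="?k"])
      using F n y3 O j al3 by (auto simp: adj_sym)
  qed
qed

lemma alice_touch:
  assumes P: "P4 x1 x2 x3 x4" and I: "Inv {x1,x2,x3,x4} f" and T: "alice_turn V f"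
    and v: "v \<notin> {x1,x2,x3,x4}" and p: "p \<in> {x1,x2,x3,x4}" and q: "q \<in> {x1,x2,x3,x4}"
    and pq: "adj E p q" and vp: "adj E v p" and j: "j \<noteq> al"
    and L: "legal_move 3 V E f v j"
  shows "bob_wins 3 V E (f(v := Some j))"
proof -
  note F = P4_facts[OF P]
  have j3: "j < 3" and vV: "v \<in> V" and fv: "f v = None"
    using L unfolding legal_move_def avail_iff by auto
  note O = oth_props[OF al3 j3 j]
  obtain yp where yp: "adj E yp p" "f yp = Some al" using Inv_al[OF I p] by auto
  have np: "f p = None" and nq: "f q = None" using Inv_none[OF I] p q by auto
  have qV: "q \<in> V" using q F by auto
  have vq: "\<not> adj E v q" using one_nbr[OF P v p q vp] adj_neq[OF pq] by auto
  let ?f1 = "f(v := Some j)"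
  let ?k = "oth al j"
  show ?thesis
  proof (rule win1[where w=q and k="?k"])
    show "\<not> alice_turn V ?f1" using flip[of v f j] vV fv T by simp
    show "legal_move 3 V E ?f1 q ?k" unfolding legal_move_def avail_iff
    proof (intro conjI allI impI)
      fix u assume u: "adj E u q"
      show "?f1 u \<noteq> Some ?k"
      proof (cases "u = v")
        case True then show ?thesis using u vq by simp
      next
        case False then show ?thesis using Inv_nb[OF I q u] O(2) by auto
      qed
    qed (use qV nq v q O in auto)
    have "yp \<noteq> v" "yp \<noteq> q" "p \<noteq> v" "p \<noteq> q" "q \<noteq> v" using yp fv nq v p q adj_neq[OF pq] by auto
    then show "blocked 3 V E (?f1(q := Some ?k))"
      apply (intro blocked3[where v=p and ua=yp and ia=al and ub=v and ib=j and uc=q and ic="?k"])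
      using F p np yp O j j3 al3 vp pq by (auto simp: adj_sym)
  qed
qed

lemma bob_single:
  assumes P: "P4 x1 x2 x3 x4" and I: "Inv {x1,x2,x3,x4} f" and T: "\<not> alice_turn V f"
    and x: "x \<in> V" "f x = None" "x \<notin> {x1,x2,x3,x4}" and p: "p \<in> {x1,x2,x3,x4}"
    and xp: "adj E x p" and j0: "j0 \<in> available 3 E f x" "j0 \<noteq> al"
    and na: "al \<notin> available 3 E f x" "oth al j0 \<notin> available 3 E f x"
  shows "bob_wins 3 V E f"
proof -
  note F = P4_facts[OF P]
  have j3: "j0 < 3" using j0 unfolding avail_iff by auto
  note O = oth_props[OF al3 j3 j0(2)]
  obtain u1 where u1: "adj E u1 x" "f u1 = Some al" using na(1) al3 unfolding avail_iff by auto
  obtain u2 where u2: "adj E u2 x" "f u2 = Some (oth al j0)" using na(2) O(1) unfolding avail_iff by auto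
  have np: "f p = None" using Inv_none[OF I p] .
  have pV: "p \<in> V" using p F by auto
  show ?thesis
  proof (rule win1[where w=p and k=j0])
    show "legal_move 3 V E f p j0" unfolding legal_move_def avail_iff
      using pV np j3 Inv_nb[OF I p] j0(2) by auto
    have "u1 \<noteq> p" "u2 \<noteq> p" "x \<noteq> p" using u1 u2 np x p by auto
    then show "blocked 3 V E (f(p := Some j0))"
      apply (intro blocked3[where v=x and ua=u1 and ia=al and ub=p and ib=j0 and uc=u2 and ic="oth al j0"])
      using x u1 u2 xp O j0 j3 al3 by (auto simp: adj_sym)
  qed (rule T)
qed

lemma bob_end:
  assumes P: "P4 x1 x2 x3 x4" and I: "Inv {x1,x2,x3,x4} f" and T: "\<not> alice_turn V f"
    and x: "x \<in> V" "f x = None" "x \<notin> {x1,x2,x3,x4}"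
    and xp: "adj E x x1" and b: "b \<in> available 3 E f x" "b \<noteq> al"
    and g: "oth al b \<in> available 3 E f x"
  shows "bob_wins 3 V E f"
proof -
  note F = P4_facts[OF P]
  note N = P4_nonadj[OF P]
  have b3: "b < 3" using b unfolding avail_iff by auto
  note O = oth_props[OF al3 b3 b(2)]
  define c where "c = oth al b"
  obtain y1 where y1: "adj E y1 x1" "f y1 = Some al" using Inv_al[OF I] by auto
  obtain y3 where y3: "adj E y3 x3" "f y3 = Some al" using Inv_al[OF I] by auto
  have n: "f x1 = None" "f x2 = None" "f x3 = None" "f x4 = None" using Inv_none[OF I] by auto
  have xn: "\<not> adj E x x2" "\<not> adj E x x3" "\<not> adj E x x4"
    using one_nbr[OF P x(3), of x1] xp F(5) by auto
  define f1 where "f1 = f(x2 := Some b)"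
  have L1: "legal_move 3 V E f x2 b" unfolding legal_move_def avail_iff
    using F(2) n(2) b3 Inv_nb[OF I, of x2] b(2) by auto
  have T1: "alice_turn V f1" using flip[of x2 f b] F(2) n(2) T unfolding f1_def by simp
  have g4: "c \<in> available 3 E f1 x4" unfolding avail_iff
  proof (intro conjI allI impI)
    fix u assume u: "adj E u x4"
    show "f1 u \<noteq> Some c"
    proof (cases "u = x2")
      case True then show ?thesis using u N(2) by simp
    next
      case False then show ?thesis using Inv_nb[OF I _ u] O(2) unfolding f1_def c_def by auto
    qed
  qed (use O c_def in auto)
  have gx: "c \<in> available 3 E f1 x" unfolding avail_iff
  proof (intro conjI allI impI)
    fix u assume u: "adj E u x"
    show "f1 u \<noteq> Some c"
    proof (cases "u = x2")
      case True then show ?thesis using u xn(1) by (simp add: adj_sym)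
    next
      case False then show ?thesis using g u unfolding f1_def c_def avail_iff by auto
    qed
  qed (use O c_def in auto)
  have y1f: "f1 y1 = Some al" "y1 \<noteq> x" using y1 n x unfolding f1_def by auto
  have y3f: "f1 y3 = Some al" "y3 \<noteq> x4" using y3 n unfolding f1_def by auto
  have "bob_wins 3 V E f1"
  proof (rule bob_wins.alice_move[OF T1])
    show "\<exists>v\<in>V. f1 v = None" using F(1) n(1) F(5) unfolding f1_def by auto
    show "\<forall>v j. legal_move 3 V E f1 v j \<longrightarrow> bob_wins 3 V E (f1(v := Some j))"
    proof (intro allI impI)
      fix v j assume Lv: "legal_move 3 V E f1 v j"
      define f2 where "f2 = f1(v := Some j)"
      have vV: "v \<in> V" "f1 v = None" "j \<in> available 3 E f1 v" using Lv unfolding legal_move_def by auto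
      have T2: "\<not> alice_turn V f2" using flip[of v f1 j] vV T1 unfolding f2_def by simp
      have v2: "v \<noteq> x2" using vV unfolding f1_def by auto
      have vy: "v \<noteq> y1" "v \<noteq> y3" using vV y1f y3f by auto
      show "bob_wins 3 V E f2"
      proof (cases "v = x3 \<or> v = x4 \<or> (adj E v x4 \<and> j = c)")
        case True
        have vx: "v \<noteq> x" using True x(3) xn(3) by (auto simp: adj_sym)
        have v1: "v \<noteq> x1" using True N(3) F(5) by auto
        have nv: "\<not> (adj E v x \<and> j = c)"
        proof
          assume H: "adj E v x \<and> j = c"
          show False
          proof (cases "v = x3 \<or> v = x4")
            case True then show ?thesis using H xn by (auto simp: adj_sym)
          next
            case False
            then have A: "adj E v x4" using \<open>v = x3 \<or> v = x4 \<or> (adj E v x4 \<and> j = c)\<close> by auto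
            show False
              using nocyc[of "[x,x1,x2,x3,x4,v]"] F x(3) xp A H False v1 v2 vx
              by (auto simp: is_cycle_def adj_sym)
          qed
        qed
        show ?thesis
        proof (rule win1[where w=x and k=c])
          show "\<not> alice_turn V f2" by (rule T2)
          show "legal_move 3 V E f2 x c" unfolding legal_move_def avail_iff
          proof (intro conjI allI impI)
            fix u assume u: "adj E u x"
            show "f2 u \<noteq> Some c"
            proof (cases "u = v")
              case True then show ?thesis using u nv unfolding f2_def by auto
            next
              case False then show ?thesis using gx u unfolding f2_def avail_iff by auto
            qed
          qed (use x vx O c_def f1_def f2_def in auto)
          show "blocked 3 V E (f2(x := Some c))"
            apply (intro blocked3[where v=x1 and ua=y1 and ia=al and ub=x2 and ib=b and uc=x and ic=c])
            using F n y1 y1f vy v1 v2 vx x O b3 b(2) al3 xp c_def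
            unfolding f2_def f1_def by (auto simp: adj_sym)
        qed
      next
        case False
        show ?thesis
        proof (rule win1[where w=x4 and k=c])
          show "\<not> alice_turn V f2" by (rule T2)
          show "legal_move 3 V E f2 x4 c" unfolding legal_move_def avail_iff
          proof (intro conjI allI impI)
            fix u assume u: "adj E u x4"
            show "f2 u \<noteq> Some c"
            proof (cases "u = v")
              case True then show ?thesis using u False unfolding f2_def by auto
            next
              case False then show ?thesis using g4 u unfolding f2_def avail_iff by auto
            qed
          qed (use F False O c_def n f1_def f2_def in auto)
          show "blocked 3 V E (f2(x4 := Some c))"
            apply (intro blocked3[where v=x3 and ua=y3 and ia=al and ub=x2 and ib=b and uc=x4 and ic=c])
            using F n y3 y3f vy v2 False O b3 b(2) al3 c_def
            unfolding f2_def f1_def by (auto simp: adj_sym)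
        qed
      qed
    qed
  qed
  then show ?thesis using bob_wins.bob_move[OF T L1] unfolding f1_def by simp
qed

lemma bob_inner:
  assumes P: "P4 x1 x2 x3 x4" and I: "Inv {x1,x2,x3,x4} f" and T: "\<not> alice_turn V f"
    and x: "x \<in> V" "f x = None" "x \<notin> {x1,x2,x3,x4}"
    and xp: "adj E x x2" and b: "b \<in> available 3 E f x" "b \<noteq> al"
    and g: "oth al b \<in> available 3 E f x"
  shows "bob_wins 3 V E f"
proof -
  note F = P4_facts[OF P]
  note N = P4_nonadj[OF P]
  have b3: "b < 3" using b unfolding avail_iff by auto
  note O = oth_props[OF al3 b3 b(2)]
  define c where "c = oth al b"
  obtain y2 where y2: "adj E y2 x2" "f y2 = Some al" using Inv_al[OF I] by auto
  obtain y3 where y3: "adj E y3 x3" "f y3 = Some al" using Inv_al[OF I] by auto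
  have n: "f x1 = None" "f x2 = None" "f x3 = None" "f x4 = None" using Inv_none[OF I] by auto
  have xn: "\<not> adj E x x1" "\<not> adj E x x3" "\<not> adj E x x4"
    using one_nbr[OF P x(3), of x2] xp F(5) by auto
  define f1 where "f1 = f(x1 := Some b)"
  have L1: "legal_move 3 V E f x1 b" unfolding legal_move_def avail_iff
    using F(1) n(1) b3 Inv_nb[OF I, of x1] b(2) by auto
  have T1: "alice_turn V f1" using flip[of x1 f b] F(1) n(1) T unfolding f1_def by simp
  have g3: "c \<in> available 3 E f1 x3" unfolding avail_iff
  proof (intro conjI allI impI)
    fix u assume u: "adj E u x3"
    show "f1 u \<noteq> Some c"
    proof (cases "u = x1")
      case True then show ?thesis using u N(1) by simp
    next
      case False then show ?thesis using Inv_nb[OF I _ u] O(2) unfolding f1_def c_def by auto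
    qed
  qed (use O c_def in auto)
  have gx: "c \<in> available 3 E f1 x" unfolding avail_iff
  proof (intro conjI allI impI)
    fix u assume u: "adj E u x"
    show "f1 u \<noteq> Some c"
    proof (cases "u = x1")
      case True then show ?thesis using u xn(1) by (simp add: adj_sym)
    next
      case False then show ?thesis using g u unfolding f1_def c_def avail_iff by auto
    qed
  qed (use O c_def in auto)
  have y2f: "f1 y2 = Some al" "y2 \<noteq> x" "y2 \<noteq> x3" using y2 n x unfolding f1_def by auto
  have y3f: "f1 y3 = Some al" "y3 \<noteq> x4" "y3 \<noteq> x2" using y3 n unfolding f1_def by auto
  have "bob_wins 3 V E f1"
  proof (rule bob_wins.alice_move[OF T1])
    show "\<exists>v\<in>V. f1 v = None" using F(2) n(2) F(5) unfolding f1_def by auto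
    show "\<forall>v j. legal_move 3 V E f1 v j \<longrightarrow> bob_wins 3 V E (f1(v := Some j))"
    proof (intro allI impI)
      fix v j assume Lv: "legal_move 3 V E f1 v j"
      define f2 where "f2 = f1(v := Some j)"
      have vV: "v \<in> V" "f1 v = None" "j \<in> available 3 E f1 v" using Lv unfolding legal_move_def by auto
      have T2: "\<not> alice_turn V f2" using flip[of v f1 j] vV T1 unfolding f2_def by simp
      have v1: "v \<noteq> x1" using vV unfolding f1_def by auto
      have vy: "v \<noteq> y2" "v \<noteq> y3" using vV y2f y3f by auto
      show "bob_wins 3 V E f2"
      proof (cases "v = x2")
        case True
        have jc: "j = c"
        proof -
          have "j < 3" "\<forall>u. adj E u x2 \<longrightarrow> f1 u \<noteq> Some j" using vV True unfolding avail_iff by auto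
          then have "j \<noteq> al" "j \<noteq> b" "j < 3" using y2f(1) y2(1) F(6) unfolding f1_def by auto
          then show ?thesis using O(5) c_def by auto
        qed
        show ?thesis
        proof (rule win1[where w=x4 and k=b])
          show "\<not> alice_turn V f2" by (rule T2)
          show "legal_move 3 V E f2 x4 b" unfolding legal_move_def avail_iff
          proof (intro conjI allI impI)
            fix u assume u: "adj E u x4"
            show "f2 u \<noteq> Some b"
              using u True N(2,3) Inv_nb[OF I, of x4 u b] b(2) unfolding f2_def f1_def
              by (auto simp: adj_sym)
          qed (use F True n b3 f1_def f2_def in auto)
          show "blocked 3 V E (f2(x4 := Some b))"
            apply (intro blocked3[where v=x3 and ua=y3 and ia=al and ub=x2 and ib=c and uc=x4 and ic=b])
            using F n y3 y3f vy True O b3 b(2) al3 c_def jc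
            unfolding f2_def f1_def by (auto simp: adj_sym)
        qed
      next
        case v2: False
        show ?thesis
        proof (cases "v = x \<or> (adj E v x \<and> j = c)")
          case True
          have v3: "v \<noteq> x3" using True x(3) xn(2) by (auto simp: adj_sym)
          have nv: "\<not> (adj E v x3 \<and> j = c)"
          proof
            assume H: "adj E v x3 \<and> j = c"
            show False
            proof (cases "v = x")
              case True then show ?thesis using H xn by (auto simp: adj_sym)
            next
              case False
              then have A: "adj E v x" using \<open>v = x \<or> (adj E v x \<and> j = c)\<close> by auto
              have v4: "v \<noteq> x4" using A xn(3) by (auto simp: adj_sym)
              show False
                using nocyc[of "[x,x2,x3,v]"] F x(3) xp A H False v1 v2 v3 v4
                by (auto simp: is_cycle_def adj_sym)
            qed
          qed
          show ?thesis
          proof (rule win1[where w=x3 and k=c])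
            show "\<not> alice_turn V f2" by (rule T2)
            show "legal_move 3 V E f2 x3 c" unfolding legal_move_def avail_iff
            proof (intro conjI allI impI)
              fix u assume u: "adj E u x3"
              show "f2 u \<noteq> Some c"
              proof (cases "u = v")
                case True then show ?thesis using u nv unfolding f2_def by auto
              next
                case False then show ?thesis using g3 u unfolding f2_def avail_iff by auto
              qed
            qed (use F v3 O c_def n f1_def f2_def in auto)
            show "blocked 3 V E (f2(x3 := Some c))"
              apply (intro blocked3[where v=x2 and ua=y2 and ia=al and ub=x1 and ib=b and uc=x3 and ic=c])
              using F n y2 y2f vy v1 v2 v3 O b3 b(2) al3 c_def
              unfolding f2_def f1_def by (auto simp: adj_sym)
          qed
        next
          case False
          show ?thesis
          proof (rule win1[where w=x and k=c])
            show "\<not> alice_turn V f2" by (rule T2)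
            show "legal_move 3 V E f2 x c" unfolding legal_move_def avail_iff
            proof (intro conjI allI impI)
              fix u assume u: "adj E u x"
              show "f2 u \<noteq> Some c"
              proof (cases "u = v")
                case True then show ?thesis using u False unfolding f2_def by auto
              next
                case False then show ?thesis using gx u unfolding f2_def avail_iff by auto
              qed
            qed (use x False O c_def f1_def f2_def in auto)
            show "blocked 3 V E (f2(x := Some c))"
              apply (intro blocked3[where v=x2 and ua=y2 and ia=al and ub=x1 and ib=b and uc=x and ic=c])
              using F n y2 y2f vy v1 v2 False x xp O b3 b(2) al3 c_def
              unfolding f2_def f1_def by (auto simp: adj_sym)
          qed
        qed
      qed
    qed
  qed
  then show ?thesis using bob_wins.bob_move[OF T L1] unfolding f1_def by simp
qed

lemma Inv_step:
  assumes I: "Inv S f" and v: "v \<notin> S" "f v = None" and j: "j = al \<or> (\<forall>p\<in>S. \<not> adj E v p)"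
  shows "Inv S (f(v := Some j))"
  unfolding Inv_def
proof (intro ballI conjI allI impI)
  fix p assume p: "p \<in> S"
  show "(f(v := Some j)) p = None" using Inv_none[OF I p] p v by auto
  obtain y where y: "adj E p y" "f y = Some al" using I p unfolding Inv_def by auto
  then show "\<exists>y. adj E p y \<and> (f(v := Some j)) y = Some al" using v by (intro exI[of _ y]) auto
  fix y assume y: "adj E p y \<and> (f(v := Some j)) y \<noteq> None"
  show "(f(v := Some j)) y = Some al"
  proof (cases "y = v")
    case True then show ?thesis using y j p by (auto simp: adj_sym)
  next
    case False then show ?thesis using y I p unfolding Inv_def by auto
  qed
qed

lemma parity:
  assumes P: "P4 x1 x2 x3 x4" and I: "Inv {x1,x2,x3,x4} f" and T: "\<not> alice_turn V f"
  shows "\<exists>x\<in>V. f x = None \<and> x \<notin> {x1,x2,x3,x4}"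
proof (rule ccontr)
  assume H: "\<not> ?thesis"
  note F = P4_facts[OF P]
  let ?S = "{x1,x2,x3,x4}"
  have SV: "?S \<subseteq> V" using F by auto
  have "{w\<in>V. f w \<noteq> None} = V - ?S" using H Inv_none[OF I] SV by auto
  moreover have cS: "card ?S = 4" using F(5) by auto
  moreover have "card ?S \<le> card V" using SV finV card_mono by blast
  ultimately have "card {w\<in>V. f w \<noteq> None} = card V - 4"
    using SV finV by (simp add: card_Diff_subset)
  moreover have "card V \<ge> 4" using \<open>card ?S \<le> card V\<close> cS by simp
  ultimately have "even (card {w\<in>V. f w \<noteq> None})" using evV by simp
  then show False using T unfolding alice_turn_def by simp
qed

lemma main:
  "P4 x1 x2 x3 x4 \<Longrightarrow> Inv {x1,x2,x3,x4} f \<Longrightarrow> bob_wins 3 V E f"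
proof (induction "card {w\<in>V. f w = None}" arbitrary: f rule: less_induct)
  case (less f)
  note P = less.prems(1) and I = less.prems(2)
  note F = P4_facts[OF P]
  note PR = P4_rev[OF P]
  have IR: "Inv {x4,x3,x2,x1} f" using I set_rev by metis
  have IH: "\<And>v j. v \<in> V \<Longrightarrow> f v = None \<Longrightarrow> Inv {x1,x2,x3,x4} (f(v := Some j)) \<Longrightarrow>
      bob_wins 3 V E (f(v := Some j))"
  proof -
    fix v j assume a: "v \<in> V" "f v = None" and c: "Inv {x1,x2,x3,x4} (f(v := Some j))"
    show "bob_wins 3 V E (f(v := Some j))"
      using less.hyps[OF dec[of v f j] P c] a by simp
  qed
  have n: "f x1 = None" using Inv_none[OF I] by auto
  show ?case
  proof (cases "alice_turn V f")
    case True
    show ?thesis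
    proof (rule bob_wins.alice_move[OF True])
      show "\<exists>v\<in>V. f v = None" using F(1) n by auto
      show "\<forall>v j. legal_move 3 V E f v j \<longrightarrow> bob_wins 3 V E (f(v := Some j))"
      proof (intro allI impI)
        fix v j assume L: "legal_move 3 V E f v j"
        have vV: "v \<in> V" "f v = None" using L unfolding legal_move_def by auto
        show "bob_wins 3 V E (f(v := Some j))"
        proof (cases "v \<in> {x1,x2,x3,x4}")
          case True
          then consider "v = x1" | "v = x2" | "v = x3" | "v = x4" by auto
          then show ?thesis
          proof cases
            case 1 then show ?thesis using alice_end[OF P I \<open>alice_turn V f\<close>] L by simp
          next
            case 2 then show ?thesis using alice_inner[OF P I \<open>alice_turn V f\<close>] L by simp
          next
            case 3 then show ?thesis using alice_inner[OF PR IR \<open>alice_turn V f\<close>] L by simp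
          next
            case 4 then show ?thesis using alice_end[OF PR IR \<open>alice_turn V f\<close>] L by simp
          qed
        next
          case vS: False
          show ?thesis
          proof (cases "j \<noteq> al \<and> (\<exists>p\<in>{x1,x2,x3,x4}. adj E v p)")
            case True
            then obtain p where p: "p \<in> {x1,x2,x3,x4}" "adj E v p" and j: "j \<noteq> al" by auto
            have "\<exists>q\<in>{x1,x2,x3,x4}. adj E p q" using p(1) F by auto
            then obtain q where q: "q \<in> {x1,x2,x3,x4}" "adj E p q" by auto
            show ?thesis using alice_touch[OF P I \<open>alice_turn V f\<close> vS p(1) q(1) q(2) p(2) j L] .
          next
            case False
            then have "j = al \<or> (\<forall>p\<in>{x1,x2,x3,x4}. \<not> adj E v p)" by auto
            then show ?thesis using IH[OF vV] Inv_step[OF I vS vV(2)] by blast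
          qed
        qed
      qed
    qed
  next
    case T: False
    show ?thesis
    proof (cases "blocked 3 V E f")
      case True then show ?thesis by (rule bob_wins.won)
    next
      case nb: False
      show ?thesis
      proof (cases "\<exists>v j. legal_move 3 V E f v j \<and> v \<notin> {x1,x2,x3,x4} \<and>
                      (j = al \<or> (\<forall>p\<in>{x1,x2,x3,x4}. \<not> adj E v p))")
        case True
        then obtain v j where L: "legal_move 3 V E f v j" and vS: "v \<notin> {x1,x2,x3,x4}"
          and j: "j = al \<or> (\<forall>p\<in>{x1,x2,x3,x4}. \<not> adj E v p)" by blast
        have vV: "v \<in> V" "f v = None" using L unfolding legal_move_def by auto
        show ?thesis
          using bob_wins.bob_move[OF T L] IH[OF vV] Inv_step[OF I vS vV(2) j] by blast
      next
        case ns: False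
        obtain x where x: "x \<in> V" "f x = None" "x \<notin> {x1,x2,x3,x4}" using parity[OF P I T] by auto
        have "available 3 E f x \<noteq> {}" using nb x unfolding blocked_def by auto
        then obtain j0 where j0: "j0 \<in> available 3 E f x" by auto
        have Lx: "\<And>j. j \<in> available 3 E f x \<Longrightarrow> legal_move 3 V E f x j"
          using x unfolding legal_move_def by auto
        have j0a: "j0 \<noteq> al" and "\<exists>p\<in>{x1,x2,x3,x4}. adj E x p" using ns Lx[OF j0] x(3) by auto
        then obtain p where p: "p \<in> {x1,x2,x3,x4}" "adj E x p" by auto
        have na: "al \<notin> available 3 E f x" using ns Lx x(3) by blast
        show ?thesis
        proof (cases "oth al j0 \<in> available 3 E f x")
          case False
          then show ?thesis using bob_single[OF P I T x p(1) p(2) j0 j0a na] by blast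
        next
          case g: True
          consider "p = x1" | "p = x2" | "p = x3" | "p = x4" using p(1) by auto
          then show ?thesis
          proof cases
            case 1 then show ?thesis using bob_end[OF P I T x _ j0 j0a g] p(2) by simp
          next
            case 2 then show ?thesis using bob_inner[OF P I T x _ j0 j0a g] p(2) by simp
          next
            case 3 then show ?thesis using bob_inner[OF PR IR T _ _ _ _ j0 j0a g] p(2) x by auto
          next
            case 4 then show ?thesis using bob_end[OF PR IR T _ _ _ _ j0 j0a g] p(2) x by auto
          qed
        qed
      qed
    qed
  qed
qed

end

theorem lemma8p2:
  fixes V :: "'a set" and E :: "'a set set" and c :: "'a \<Rightarrow> nat option"
  assumes "is_tree V E"
    and "even (card V)"
    and "reachable 3 V E c"
    and "al < 3"
    and "surrounded_P4 V E c al P"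
  shows "bob_wins 3 V E c"
proof -
  interpret tg V E al using assms(1,2,4) by unfold_locales
  have S: "length P = 4" "distinct P" "set P \<subseteq> V" "is_walk E P"
    "\<forall>x\<in>set P. c x = None \<and> (\<exists>y. adj E x y \<and> c y = Some al) \<and>
        (\<forall>y. adj E x y \<and> c y \<noteq> None \<longrightarrow> c y = Some al)"
    using assms(5) unfolding surrounded_P4_def by auto
  obtain x1 x2 x3 x4 where Pe: "P = [x1,x2,x3,x4]"
    using S(1) by (auto simp: length_Suc_conv numeral_eq_Suc)
  have P: "P4 x1 x2 x3 x4" using S(1-4) unfolding Pe P4_def by auto
  have I: "Inv {x1,x2,x3,x4} c" using S(5) unfolding Pe Inv_def by auto
  show ?thesis using main[OF P I] .
qed

end
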